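(* Let $S$ be a system of dimension $m\ge2$ with Hamiltonian $H_S$, maximal energy $E^S_{\max}$, Gibbs state $\tau_S$ and partition function $Z_S=\mathrm{tr}(e^{-\beta H_S})$, and let $\Pi^S_{\max}=|E^S_{\max}\rangle\langle E^S_{\max}|$ be a pure eigenstate of energy $E^S_{\max}$. Let the catalyst $C$ have a Hamiltonian $H_C$ with discrete spectrum consisting of nonnegative eigenvalues $E^C_1\le E^C_2\le\cdots$ (with multiplicity), $E^C_j\to\infty$, and finite partition function $Z_C=\sum_j e^{-\beta E^C_j}<\infty$. Let $\omega_C,\omega'_C$ be catalyst states diagonal in the eigenbasis of $H_C$, such that $\omega_C\otimes\tau_S\to\omega'_C\otimes\Pi^S_{\max}$ is possible by catalytic thermal operations, and such that $\omega_C$ has average energy $\mathrm{tr}(\omega_CH_C)\le E$ for a finite constant $E\ge E^C_1$. Then $$d_{\rm opt}:=\tfrac12\|\omega_C-\omega'_C\|_1\ \ge\ \frac12\,\frac{f(A)^2\varepsilon_C^2}{Z_C}>0,$$ where $A=Z_S/e^{-\beta E^S_{\max}}$, $f(a)=\frac12\frac{a^2}{a^2+1}$, $\varepsilon_C=\sup_{W\in(0,1)}W\gamma^{E^C_{j(W)}}$ with $\gamma=e^{-\beta}$, and $j(W)=\min\{j\ge1: E^C_{j+1}>E/(1-W)\}$.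
   Context: $\beta>0$ is the inverse temperature of the bath. A transformation $\rho\to\rho'$ on a system with Gibbs state $\tau$ being possible by catalytic thermal operations implies (known fact, may be assumed) that $D_\alpha(\rho\|\tau)\ge D_\alpha(\rho'\|\tau)$ for all $\alpha\ge0$; here the relevant system is $CS$ with Gibbs state $\tau_C\otimes\tau_S$, $\tau_C=e^{-\beta H_C}/Z_C$. For commuting states with eigenvalue vectors $p,q$, $D_\alpha(p\|q)=\frac{1}{\alpha-1}\log\sum_ip_i^\alpha q_i^{1-\alpha}$; in particular $D_{1/2}(p\|q)=-2\log\sum_i\sqrt{p_iq_i}$. For diagonal catalysts with eigenvalues $\omega_j,\omega'_j$ the $\alpha=1/2$ condition reads $\sum_j\sqrt{\omega'_j}\,e^{-\beta E^C_j/2}\ge\sqrt{A}\sum_j\sqrt{\omega_j}\,e^{-\beta E^C_j/2}$. *)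

theory Defs
  imports "HOL-Analysis.Analysis"
begin

text \<open>Natural log is used; the base is irrelevant for monotonicity statements.\<close>
definition renyi_div :: "real \<Rightarrow> ('a \<Rightarrow> real) \<Rightarrow> ('a \<Rightarrow> real) \<Rightarrow> 'a set \<Rightarrow> real" where
  "renyi_div \<alpha> p q I = 1 / (\<alpha> - 1) * ln (infsum (\<lambda>x. p x powr \<alpha> * q x powr (1 - \<alpha>)) I)"

definition fA :: "real \<Rightarrow> real" where
  "fA a = 1/2 * (a^2 / (a^2 + 1))"

text \<open>j(W) = min { j : E_{j+1} > E/(1-W) } for a 0-indexed spectrum E_C 0 \<le> E_C 1 \<le> ...
  (the paper's index j \<ge> 1 corresponds to our index j-1 \<ge> 0).\<close>
definition jW :: "(nat \<Rightarrow> real) \<Rightarrow> real \<Rightarrow> real \<Rightarrow> nat" where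
  "jW EC Eb W = (LEAST j. EC (Suc j) > Eb / (1 - W))"

definition epsC :: "real \<Rightarrow> (nat \<Rightarrow> real) \<Rightarrow> real \<Rightarrow> real" where
  "epsC \<beta> EC Eb = (SUP W\<in>{0<..<1}. W * exp (-\<beta>) powr EC (jW EC Eb W))"

end

theory Submission
  imports Defs
begin

lemma poly_aux:
  fixes A :: real assumes "A \<ge> 2"
  shows "(3*A^2+2)^2 \<le> A * (2*A^2+2)^2"
proof -
  obtain t where t: "t \<ge> 0" "A = 2 + t" using assms by (metis add.commute diff_add_cancel diff_ge_0_iff_ge)
  show ?thesis unfolding t(2) using t(1) by (simp add: power2_eq_square algebra_simps)
qed

lemma fA_le:
  fixes A :: real assumes "A \<ge> 2"
  shows "fA A \<le> sqrt A - 1"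
proof -
  have p: "(3*A^2+2)/(2*A^2+2) \<le> sqrt A"
    apply (rule real_le_rsqrt)
    using poly_aux[OF assms] assms by (simp add: power_divide divide_le_eq)
  have "fA A = 1/2 * (A^2/(A^2+1))" by (simp add: fA_def)
  also have "\<dots> = (3*A^2+2)/(2*A^2+2) - 1"
  proof -
    have "A^2+1 > 0" by (simp add: add_nonneg_pos)
    hence "2*A^2+2 \<noteq> 0" "A^2+1 \<noteq> 0" by auto
    thus ?thesis by (simp add: field_simps)
  qed
  finally show ?thesis using p by linarith
qed

lemma prod_infsum:
  fixes u c :: "nat \<Rightarrow> real"
  assumes "\<And>j. u j \<ge> 0" "\<And>i. c i \<ge> 0" "(u has_sum U) UNIV"
  shows "infsum (\<lambda>(j,i). u j * c i) (UNIV \<times> {..<m}) = U * (\<Sum>i<m. c i)"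
proof -
  have inner: "((\<lambda>i. (\<lambda>(j,i). u j * c i) (j, i)) has_sum (u j * (\<Sum>i<m. c i))) {..<m}" for j
    by (rule has_sum_finiteI) (auto simp: sum_distrib_left)
  have outer: "((\<lambda>j. u j * (\<Sum>i<m. c i)) has_sum (U * (\<Sum>i<m. c i))) UNIV"
    using has_sum_cmult_left[OF assms(3), of "(\<Sum>i<m. c i)"] by (metis (no_types, lifting) ext mult.commute)
  have summ: "(\<lambda>(j,i). u j * c i) summable_on Sigma UNIV (\<lambda>_. {..<m})"
    apply (rule summable_on_SigmaI[OF inner])
    using outer has_sum_iff apply blast
    using assms by auto
  have "((\<lambda>(j,i). u j * c i) has_sum (U * (\<Sum>i<m. c i))) (Sigma UNIV (\<lambda>_. {..<m}))"
    by (rule has_sum_SigmaI[OF inner outer summ])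
  then show ?thesis by (simp add: infsumI)
qed

lemma sqrt_h_summable:
  fixes \<beta> :: real and EC \<omega> :: "nat \<Rightarrow> real"
  assumes "\<And>j. \<omega> j \<ge> 0" "summable \<omega>" "summable (\<lambda>j. exp (- \<beta> * EC j))"
  shows "summable (\<lambda>j. sqrt (\<omega> j) * exp (- \<beta> * EC j / 2))"
proof (rule summable_comparison_test')
  show "summable (\<lambda>j. (\<omega> j + exp (- \<beta> * EC j)) / 2)"
    using assms by (intro summable_divide summable_add)
  fix j :: nat
  have e: "exp (- \<beta> * EC j / 2)^2 = exp (- \<beta> * EC j)"
    by (simp add: power2_eq_square exp_add[symmetric])
  have s: "sqrt (\<omega> j)^2 = \<omega> j" using assms(1) by simp
  have "2 * (sqrt (\<omega> j) * exp (- \<beta> * EC j / 2)) \<le> sqrt (\<omega> j)^2 + exp (- \<beta> * EC j / 2)^2"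
  proof -
    have "0 \<le> (sqrt (\<omega> j) - exp (- \<beta> * EC j / 2))^2" by simp
    thus ?thesis by (simp add: power2_diff)
  qed
  then show "norm (sqrt (\<omega> j) * exp (- \<beta> * EC j / 2)) \<le> (\<omega> j + exp (- \<beta> * EC j)) / 2"
    using e s by simp
qed

lemma markov_bound:
  fixes \<beta> Eb W :: real and EC \<omega> :: "nat \<Rightarrow> real"
  assumes beta_pos: "\<beta> > 0"
    and EC_nonneg: "\<And>j. EC j \<ge> 0"
    and EC_mono: "mono EC"
    and EC_inf: "filterlim EC at_top sequentially"
    and ZC_fin: "summable (\<lambda>j. exp (- \<beta> * EC j))"
    and \<omega>_nonneg: "\<And>j. \<omega> j \<ge> 0" and \<omega>_sum: "(\<lambda>j. \<omega> j) sums 1"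
    and energy: "summable (\<lambda>j. \<omega> j * EC j)" "(\<Sum>j. \<omega> j * EC j) \<le> Eb"
    and Eb_ge: "Eb \<ge> EC 0"
    and W: "0 < W" "W < 1"
  shows "W * exp (-\<beta>) powr EC (jW EC Eb W) \<le> (\<Sum>j. sqrt (\<omega> j) * exp (- \<beta> * EC j / 2))"
proof -
  define T where "T = Eb / (1 - W)"
  define J where "J = jW EC Eb W"
  have T0: "T \<ge> 0" unfolding T_def using W Eb_ge EC_nonneg[of 0] by simp
  have ex: "\<exists>j. EC (Suc j) > T"
  proof -
    have "eventually (\<lambda>n. EC n \<ge> T + 1) sequentially"
      using EC_inf by (simp add: filterlim_at_top)
    then obtain N where "\<And>n. n \<ge> N \<Longrightarrow> EC n \<ge> T + 1" by (auto simp: eventually_at_top_linorder)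
    hence "EC (Suc N) \<ge> T + 1" by simp
    hence "EC (Suc N) > T" by simp
    thus ?thesis by blast
  qed
  have J1: "EC (Suc J) > T" unfolding J_def jW_def T_def[symmetric] by (rule LeastI_ex[OF ex])
  have tailbig: "EC (n + Suc J) > T" for n
    using J1 EC_mono[unfolded mono_def, rule_format, of "Suc J" "n + Suc J"] by simp
  have ws: "summable \<omega>" using \<omega>_sum by (simp add: sums_iff)
  have ws1: "suminf \<omega> = 1" using \<omega>_sum by (simp add: sums_iff)
  have wle1: "\<omega> j \<le> 1" for j
  proof -
    have "sum \<omega> {j} \<le> suminf \<omega>" by (rule sum_le_suminf[OF ws]) (auto simp: \<omega>_nonneg)
    thus ?thesis using ws1 by simp
  qed
  define R where "R = (\<Sum>n. \<omega> (n + Suc J))"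
  have Rs: "summable (\<lambda>n. \<omega> (n + Suc J))" using ws by (rule summable_ignore_initial_segment)
  have split1: "1 = R + (\<Sum>i<Suc J. \<omega> i)"
    using suminf_split_initial_segment[OF ws, of "Suc J"] ws1 R_def by simp
  define RE where "RE = (\<Sum>n. \<omega> (n + Suc J) * EC (n + Suc J))"
  have REs: "summable (\<lambda>n. \<omega> (n + Suc J) * EC (n + Suc J))"
    using summable_ignore_initial_segment[OF energy(1), of "Suc J"] by simp
  have split2: "(\<Sum>j. \<omega> j * EC j) = RE + (\<Sum>i<Suc J. \<omega> i * EC i)"
    using suminf_split_initial_segment[OF energy(1), of "Suc J"] RE_def by simp
  have headE: "(\<Sum>i<Suc J. \<omega> i * EC i) \<ge> 0" by (intro sum_nonneg) (simp add: \<omega>_nonneg EC_nonneg)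
  have RE_le: "RE \<le> Eb" using split2 headE energy(2) by linarith
  have RE_ge: "RE \<ge> T * R"
  proof -
    have "T * R = (\<Sum>n. T * \<omega> (n + Suc J))" unfolding R_def using Rs by (simp add: suminf_mult)
    also have "\<dots> \<le> RE" unfolding RE_def
    proof (rule suminf_le)
      fix n
      have "\<omega> (n + Suc J) * T \<le> \<omega> (n + Suc J) * EC (n + Suc J)"
        using tailbig[of n] \<omega>_nonneg[of "n + Suc J"] by (intro mult_left_mono) auto
      thus "T * \<omega> (n + Suc J) \<le> \<omega> (n + Suc J) * EC (n + Suc J)" by (simp only: mult.commute[of T])
      show "summable (\<lambda>n. T * \<omega> (n + Suc J))" using Rs by (rule summable_mult)
      show "summable (\<lambda>n. \<omega> (n + Suc J) * EC (n + Suc J))" by (rule REs)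
    qed
    finally show ?thesis .
  qed
  have R0: "R \<ge> 0" unfolding R_def using Rs by (simp add: \<omega>_nonneg suminf_nonneg)
  have Rle: "R \<le> 1 - W"
  proof (cases "T = 0")
    case True
    have "RE \<ge> 0" unfolding RE_def using REs by (simp add: \<omega>_nonneg EC_nonneg suminf_nonneg)
    moreover have "Eb = 0" using True W unfolding T_def by simp
    ultimately have "RE = 0" using RE_le by simp
    hence "\<forall>n. \<omega> (n + Suc J) * EC (n + Suc J) = 0"
      unfolding RE_def using suminf_eq_zero_iff[OF REs] \<omega>_nonneg EC_nonneg by simp
    hence all: "\<forall>n. \<omega> (n + Suc J) * EC (n + Suc J) = 0" .
    have "\<omega> (n + Suc J) = 0" for n using all[rule_format, of n] tailbig[of n] True by auto
    hence "\<forall>n. \<omega> (n + Suc J) = 0" by blast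
    hence "R = 0" unfolding R_def by simp
    then show ?thesis using W by simp
  next
    case False
    hence Tp: "T > 0" using T0 by simp
    have "T * R \<le> T * (1 - W)" using RE_ge RE_le W unfolding T_def by simp
    thus ?thesis using Tp by simp
  qed
  have head: "(\<Sum>i<Suc J. \<omega> i) \<ge> W" using split1 Rle by linarith
  have hJ: "exp (-\<beta>) powr EC J \<le> exp (- \<beta> * EC i / 2)" if "i < Suc J" for i
  proof -
    have "EC i \<le> EC J" using that EC_mono by (simp add: mono_def)
    hence a: "\<beta> * EC i \<le> \<beta> * EC J" using beta_pos by (intro mult_left_mono) auto
    have b: "\<beta> * EC i \<ge> 0" using beta_pos EC_nonneg[of i] by simp
    from a b have c: "- \<beta> * EC J \<le> - \<beta> * EC i / 2" by linarith
    have "exp (-\<beta>) powr EC J = exp (- \<beta> * EC J)" by (simp add: powr_def)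
    thus ?thesis using c by simp
  qed
  have "W * exp (-\<beta>) powr EC J \<le> (\<Sum>i<Suc J. \<omega> i) * exp (-\<beta>) powr EC J"
    using head by (simp add: mult_right_mono)
  also have "\<dots> = (\<Sum>i<Suc J. \<omega> i * exp (-\<beta>) powr EC J)" by (rule sum_distrib_right)
  also have "\<dots> \<le> (\<Sum>i<Suc J. sqrt (\<omega> i) * exp (- \<beta> * EC i / 2))"
  proof (rule sum_mono)
    fix i assume "i \<in> {..<Suc J}"
    hence "exp (-\<beta>) powr EC J \<le> exp (- \<beta> * EC i / 2)" using hJ by simp
    moreover have "\<omega> i \<le> sqrt (\<omega> i)"
    proof -
      have a: "sqrt (\<omega> i) \<le> 1" using wle1[of i] \<omega>_nonneg[of i] by simp
      have "\<omega> i = sqrt (\<omega> i) * sqrt (\<omega> i)" using \<omega>_nonneg[of i] by simp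
      also have "\<dots> \<le> sqrt (\<omega> i) * 1" using a \<omega>_nonneg[of i] by (intro mult_left_mono) auto
      finally show ?thesis by simp
    qed
    ultimately show "\<omega> i * exp (-\<beta>) powr EC J \<le> sqrt (\<omega> i) * exp (- \<beta> * EC i / 2)"
      using \<omega>_nonneg[of i] by (intro mult_mono) auto
  qed
  also have "\<dots> \<le> (\<Sum>j. sqrt (\<omega> j) * exp (- \<beta> * EC j / 2))"
    by (rule sum_le_suminf[OF sqrt_h_summable[OF \<omega>_nonneg ws ZC_fin]]) (auto simp: \<omega>_nonneg)
  finally show ?thesis unfolding J_def .
qed


lemma amgm_series:
  fixes d h :: "nat \<Rightarrow> real"
  assumes s1: "summable (\<lambda>j. d j * h j)" and s2: "summable (\<lambda>j. (d j)^2)"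
    and s3: "summable (\<lambda>j. (h j)^2)" and X: "(\<Sum>j. d j * h j) > 0" and H: "(\<Sum>j. (h j)^2) > 0"
  shows "(\<Sum>j. d j * h j)^2 \<le> (\<Sum>j. (h j)^2) * (\<Sum>j. (d j)^2)"
proof -
  define Xs where "Xs = (\<Sum>j. d j * h j)"
  define Hs where "Hs = (\<Sum>j. (h j)^2)"
  define Ds where "Ds = (\<Sum>j. (d j)^2)"
  define s where "s = Hs / Xs"
  have sp: "s > 0" unfolding s_def Xs_def Hs_def using X H by simp
  have tw: "d j * h j \<le> (s * (d j)^2 + (h j)^2 / s) / 2" for j
  proof -
    have "0 \<le> (s * d j - h j)^2 / s" using sp by simp
    also have "(s * d j - h j)^2 / s = s * (d j)^2 + (h j)^2 / s - 2 * (d j * h j)"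
      using sp by (simp add: power2_eq_square field_simps)
    finally show ?thesis by simp
  qed
  have "Xs \<le> (\<Sum>j. (s * (d j)^2 + (h j)^2 / s) / 2)"
    unfolding Xs_def
    by (rule suminf_le) (use tw s1 s2 s3 in \<open>auto intro!: summable_divide summable_add summable_mult\<close>)
  also have "\<dots> = (s * Ds + Hs / s) / 2"
  proof -
    have "(\<lambda>j. (s * (d j)^2 + (h j)^2 / s) / 2) sums ((s * Ds + Hs / s) / 2)"
      unfolding Ds_def Hs_def
      by (intro sums_divide sums_add sums_mult summable_sums s2 s3)
    thus ?thesis by (simp add: sums_iff)
  qed
  also have "\<dots> = (Hs * Ds / Xs + Xs) / 2"
    unfolding s_def using X H unfolding Xs_def Hs_def by (simp add: field_simps)
  finally have "Xs \<le> (Hs * Ds / Xs + Xs) / 2" .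
  hence "Xs \<le> Hs * Ds / Xs" by simp
  hence "Xs * Xs \<le> Hs * Ds" using X unfolding Xs_def by (simp add: le_divide_eq)
  thus ?thesis unfolding Xs_def Hs_def Ds_def by (simp add: power2_eq_square)
qed

lemma sqrt_aux:
  fixes a c t :: real
  assumes "0 \<le> t"
  shows "sqrt (a*t) * sqrt (c*t) = sqrt a * sqrt c * t"
proof -
  have "sqrt (a*t) * sqrt (c*t) = sqrt a * sqrt c * (sqrt t * sqrt t)" by (simp add: real_sqrt_mult ac_simps)
  also have "sqrt t * sqrt t = t" using assms by simp
  finally show ?thesis .
qed

lemma pw1:
  fixes w c t :: real
  assumes "0 \<le> w" "0 \<le> c" "0 \<le> t"
  shows "(w * t) powr (1/2) * (c * t) powr (1 - 1/2) = sqrt w * sqrt c * t"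
proof -
  have e: "(1::real) - 1/2 = 1/2" by simp
  show ?thesis unfolding e using assms
    by (simp add: powr_half_sqrt sqrt_aux)
qed

lemma pw2:
  fixes w c t :: real
  assumes "0 \<le> w" "0 \<le> c" "0 \<le> t"
  shows "(w * (if b then 1 else 0)) powr (1/2) * (c * t) powr (1 - 1/2) = sqrt w * sqrt c * (if b then sqrt t else 0)"
proof -
  have e: "(1::real) - 1/2 = 1/2" by simp
  show ?thesis unfolding e using assms
    by (simp add: powr_half_sqrt real_sqrt_mult)
qed

theorem mainTheorem8:
  fixes \<beta> :: real and m :: nat and ES :: "nat \<Rightarrow> real" and k :: nat
    and EC :: "nat \<Rightarrow> real" and \<omega> \<omega>' :: "nat \<Rightarrow> real" and Eb :: real
  assumes beta_pos: "\<beta> > 0"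
    and m_ge: "m \<ge> 2"
    and k_max: "k < m" "ES k = Max (ES ` {..<m})"
    and EC_nonneg: "\<And>j. EC j \<ge> 0"
    and EC_mono: "mono EC"
    and EC_inf: "filterlim EC at_top sequentially"
    and ZC_fin: "summable (\<lambda>j. exp (- \<beta> * EC j))"
    and \<omega>_nonneg: "\<And>j. \<omega> j \<ge> 0" and \<omega>_sum: "(\<lambda>j. \<omega> j) sums 1"
    and \<omega>'_nonneg: "\<And>j. \<omega>' j \<ge> 0" and \<omega>'_sum: "(\<lambda>j. \<omega>' j) sums 1"
    and energy: "summable (\<lambda>j. \<omega> j * EC j)" "(\<Sum>j. \<omega> j * EC j) \<le> Eb"
    and Eb_ge: "Eb \<ge> EC 0"
    and CTO_renyi: "\<forall>\<alpha>\<in>{0<..<1}.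
       renyi_div \<alpha> (\<lambda>(j, i). \<omega> j * (exp (- \<beta> * ES i) / (\<Sum>l<m. exp (- \<beta> * ES l))))
                  (\<lambda>(j, i). (exp (- \<beta> * EC j) / (\<Sum>l. exp (- \<beta> * EC l)))
                            * (exp (- \<beta> * ES i) / (\<Sum>l<m. exp (- \<beta> * ES l))))
                  (UNIV \<times> {..<m})
       \<ge> renyi_div \<alpha> (\<lambda>(j, i). \<omega>' j * (if i = k then 1 else 0))
                  (\<lambda>(j, i). (exp (- \<beta> * EC j) / (\<Sum>l. exp (- \<beta> * EC l)))
                            * (exp (- \<beta> * ES i) / (\<Sum>l<m. exp (- \<beta> * ES l))))
                  (UNIV \<times> {..<m})"
  shows "1/2 * (\<Sum>j. \<bar>\<omega> j - \<omega>' j\<bar>)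
           \<ge> 1/2 * (fA ((\<Sum>l<m. exp (- \<beta> * ES l)) / exp (- \<beta> * ES k)))^2 * (epsC \<beta> EC Eb)^2
               / (\<Sum>l. exp (- \<beta> * EC l))
       \<and> 1/2 * (fA ((\<Sum>l<m. exp (- \<beta> * ES l)) / exp (- \<beta> * ES k)))^2 * (epsC \<beta> EC Eb)^2
               / (\<Sum>l. exp (- \<beta> * EC l)) > 0"
proof -
  define ZS where "ZS = (\<Sum>l<m. exp (- \<beta> * ES l))"
  define ZC where "ZC = (\<Sum>l. exp (- \<beta> * EC l))"
  define ek where "ek = exp (- \<beta> * ES k)"
  define A where "A = ZS / ek"
  define h where "h j = exp (- \<beta> * EC j / 2)" for j
  define Sa where "Sa = (\<Sum>j. sqrt (\<omega> j) * h j)"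
  define Sb where "Sb = (\<Sum>j. sqrt (\<omega>' j) * h j)"
  define \<epsilon> where "\<epsilon> = epsC \<beta> EC Eb"
  have ws: "summable \<omega>" using \<omega>_sum by (simp add: sums_iff)
  have ws': "summable \<omega>'" using \<omega>'_sum by (simp add: sums_iff)
  have h2: "(h j)^2 = exp (- \<beta> * EC j)" for j
    unfolding h_def by (simp add: power2_eq_square exp_add[symmetric])
  have hpos: "h j > 0" for j unfolding h_def by simp
  have sa: "summable (\<lambda>j. sqrt (\<omega> j) * h j)"
    unfolding h_def by (rule sqrt_h_summable[OF \<omega>_nonneg ws ZC_fin])
  have sb: "summable (\<lambda>j. sqrt (\<omega>' j) * h j)"
    unfolding h_def by (rule sqrt_h_summable[OF \<omega>'_nonneg ws' ZC_fin])
  have ZCpos: "ZC > 0" unfolding ZC_def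
    by (rule suminf_pos[OF ZC_fin]) simp
  have eS: "ES l \<le> ES k" if "l < m" for l
    unfolding k_max(2) using that by (intro Max_ge) auto
  have ekpos: "ek > 0" unfolding ek_def by simp
  have ZSge: "ZS \<ge> real m * ek"
  proof -
    have "(\<Sum>l<m. ek) \<le> ZS" unfolding ZS_def ek_def
    proof (intro sum_mono)
      fix l assume "l \<in> {..<m}"
      hence "ES l \<le> ES k" using eS by simp
      thus "exp (- \<beta> * ES k) \<le> exp (- \<beta> * ES l)" using beta_pos by (simp add: mult_le_cancel_left_pos)
    qed
    thus ?thesis by simp
  qed
  have ZSpos: "ZS > 0"
  proof -
    have "real m * ek > 0" using ekpos m_ge by simp
    thus ?thesis using ZSge by linarith
  qed
  have A2: "A \<ge> 2"
  proof -
    have "real m \<ge> 2" using m_ge by simp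
    hence "2 * ek \<le> real m * ek" using ekpos by (intro mult_right_mono) auto
    hence "2 * ek \<le> ZS" using ZSge by linarith
    thus ?thesis unfolding A_def using ekpos by (simp add: le_divide_eq)
  qed
  have Sapos: "Sa > 0"
  proof -
    have "\<exists>j. \<omega> j > 0"
    proof (rule ccontr)
      assume "\<not> (\<exists>j. \<omega> j > 0)"
      hence "\<omega> j = 0" for j using \<omega>_nonneg[of j] by (meson not_less order.antisym)
      hence "\<omega> = (\<lambda>_. 0)" by auto
      hence "suminf \<omega> = 0" by simp
      thus False using \<omega>_sum by (simp add: sums_iff)
    qed
    then obtain j where "\<omega> j > 0" by blast
    hence pos: "0 < sqrt (\<omega> j) * h j" using hpos[of j] by simp
    show ?thesis unfolding Sa_def
      by (rule suminf_pos2[OF sa _ pos]) (simp add: less_imp_le[OF hpos] \<omega>_nonneg)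
  qed
  have Sbpos: "Sb > 0"
  proof -
    have "\<exists>j. \<omega>' j > 0"
    proof (rule ccontr)
      assume "\<not> (\<exists>j. \<omega>' j > 0)"
      hence "\<omega>' j = 0" for j using \<omega>'_nonneg[of j] by (meson not_less order.antisym)
      hence "\<omega>' = (\<lambda>_. 0)" by auto
      hence "suminf \<omega>' = 0" by simp
      thus False using \<omega>'_sum by (simp add: sums_iff)
    qed
    then obtain j where "\<omega>' j > 0" by blast
    hence pos: "0 < sqrt (\<omega>' j) * h j" using hpos[of j] by simp
    show ?thesis unfolding Sb_def
      by (rule suminf_pos2[OF sb _ pos]) (simp add: less_imp_le[OF hpos] \<omega>'_nonneg)
  qed
  have sqrtC: "sqrt (exp (- \<beta> * EC j) / ZC) = h j / sqrt ZC" for j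
  proof -
    have "sqrt (exp (- \<beta> * EC j)) = h j" using real_sqrt_unique[OF h2[of j]] hpos[of j] by simp
    thus ?thesis by (simp add: real_sqrt_divide)
  qed
  have tS: "(\<Sum>i<m. exp (- \<beta> * ES i) / ZS) = 1"
  proof -
    have "(\<Sum>i<m. exp (- \<beta> * ES i) / ZS) = (\<Sum>i<m. exp (- \<beta> * ES i)) / ZS"
      by (rule sum_divide_distrib[symmetric])
    also have "\<dots> = ZS / ZS" unfolding ZS_def ..
    also have "\<dots> = 1" using ZSpos by simp
    finally show ?thesis .
  qed
  let ?I = "(UNIV::nat set) \<times> {..<m}"
  let ?P = "\<lambda>(j::nat, i::nat). \<omega> j * (exp (- \<beta> * ES i) / (\<Sum>l<m. exp (- \<beta> * ES l)))"
  let ?P' = "\<lambda>(j::nat, i::nat). \<omega>' j * (if i = k then 1 else 0)"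
  let ?Q = "\<lambda>(j::nat, i::nat). (exp (- \<beta> * EC j) / (\<Sum>l. exp (- \<beta> * EC l)))
                            * (exp (- \<beta> * ES i) / (\<Sum>l<m. exp (- \<beta> * ES l)))"
  have C: "renyi_div (1/2) ?P ?Q ?I \<ge> renyi_div (1/2) ?P' ?Q ?I"
    by (rule bspec[OF CTO_renyi]) simp
  have eqL: "infsum (\<lambda>x. ?P x powr (1/2) * ?Q x powr (1 - 1/2)) ?I = Sa / sqrt ZC"
  proof -
    have "infsum (\<lambda>x. ?P x powr (1/2) * ?Q x powr (1 - 1/2)) ?I
        = infsum (\<lambda>(j,i). (sqrt (\<omega> j) * h j / sqrt ZC) * (exp (- \<beta> * ES i) / ZS)) ?I"
    proof (rule infsum_cong)
      fix x :: "nat \<times> nat" assume "x \<in> ?I"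
      obtain j i where x: "x = (j, i)" by force
      have t: "exp (- \<beta> * ES i) / ZS \<ge> 0" using ZSpos by simp
      have "?P x powr (1/2) * ?Q x powr (1 - 1/2)
          = sqrt (\<omega> j) * sqrt (exp (- \<beta> * EC j) / ZC) * (exp (- \<beta> * ES i) / ZS)"
        unfolding x prod.case ZS_def[symmetric] ZC_def[symmetric]
        by (rule pw1) (use \<omega>_nonneg[of j] ZCpos ZSpos in auto)
      also have "\<dots> = (sqrt (\<omega> j) * h j / sqrt ZC) * (exp (- \<beta> * ES i) / ZS)"
        unfolding sqrtC by simp
      finally show "?P x powr (1/2) * ?Q x powr (1 - 1/2) = (\<lambda>(j,i). (sqrt (\<omega> j) * h j / sqrt ZC) * (exp (- \<beta> * ES i) / ZS)) x"
        using x by simp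
    qed
    also have "\<dots> = Sa / sqrt ZC * (\<Sum>i<m. exp (- \<beta> * ES i) / ZS)"
    proof (rule prod_infsum)
      show "((\<lambda>j. sqrt (\<omega> j) * h j / sqrt ZC) has_sum (Sa / sqrt ZC)) UNIV"
        unfolding Sa_def
        by (rule sums_nonneg_imp_has_sum) (use sa \<omega>_nonneg less_imp_le[OF hpos] ZCpos in \<open>auto intro!: sums_divide summable_sums\<close>)
    qed (use \<omega>_nonneg less_imp_le[OF hpos] ZSpos ZCpos in auto)
    finally show ?thesis using tS by simp
  qed
  have eqR: "infsum (\<lambda>x. ?P' x powr (1/2) * ?Q x powr (1 - 1/2)) ?I = Sb / sqrt ZC * sqrt (ek / ZS)"
  proof -
    have "infsum (\<lambda>x. ?P' x powr (1/2) * ?Q x powr (1 - 1/2)) ?I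
        = infsum (\<lambda>(j,i). (sqrt (\<omega>' j) * h j / sqrt ZC) * (if i = k then sqrt (ek / ZS) else 0)) ?I"
    proof (rule infsum_cong)
      fix x :: "nat \<times> nat" assume "x \<in> ?I"
      obtain j i where x: "x = (j, i)" by force
      have t: "exp (- \<beta> * ES i) / ZS \<ge> 0" using ZSpos by simp
      have "?P' x powr (1/2) * ?Q x powr (1 - 1/2)
          = sqrt (\<omega>' j) * sqrt (exp (- \<beta> * EC j) / ZC) * (if i = k then sqrt (exp (- \<beta> * ES i) / ZS) else 0)"
        unfolding x prod.case ZS_def[symmetric] ZC_def[symmetric]
        by (rule pw2) (use \<omega>'_nonneg[of j] ZCpos ZSpos in auto)
      also have "\<dots> = (sqrt (\<omega>' j) * h j / sqrt ZC) * (if i = k then sqrt (ek / ZS) else 0)"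
        unfolding sqrtC by (simp add: ek_def)
      finally show "?P' x powr (1/2) * ?Q x powr (1 - 1/2) = (\<lambda>(j,i). (sqrt (\<omega>' j) * h j / sqrt ZC) * (if i = k then sqrt (ek / ZS) else 0)) x"
        using x by simp
    qed
    also have "\<dots> = Sb / sqrt ZC * (\<Sum>i<m. if i = k then sqrt (ek / ZS) else 0)"
    proof (rule prod_infsum)
      show "((\<lambda>j. sqrt (\<omega>' j) * h j / sqrt ZC) has_sum (Sb / sqrt ZC)) UNIV"
        unfolding Sb_def
        by (rule sums_nonneg_imp_has_sum) (use sb \<omega>'_nonneg less_imp_le[OF hpos] ZCpos in \<open>auto intro!: sums_divide summable_sums\<close>)
    qed (use \<omega>'_nonneg less_imp_le[OF hpos] ZSpos ZCpos ekpos in auto)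
    finally show ?thesis using k_max(1) by simp
  qed
  have "-2 * ln (Sa / sqrt ZC) \<ge> -2 * ln (Sb / sqrt ZC * sqrt (ek / ZS))"
    using C unfolding renyi_div_def eqL eqR by simp
  hence "ln (Sa / sqrt ZC) \<le> ln (Sb / sqrt ZC * sqrt (ek / ZS))" by simp
  hence "Sa / sqrt ZC \<le> Sb / sqrt ZC * sqrt (ek / ZS)"
    using Sapos Sbpos ZCpos ZSpos ekpos by (simp add: ln_le_cancel_iff)
  hence "Sa / sqrt ZC \<le> (Sb * sqrt (ek / ZS)) / sqrt ZC" by (simp only: times_divide_eq_left)
  hence SaSb: "Sa \<le> Sb * sqrt (ek / ZS)" using ZCpos by (simp add: divide_le_cancel)
  have sqA: "sqrt (ek / ZS) = 1 / sqrt A" unfolding A_def by (simp add: real_sqrt_divide)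
  have sqApos: "sqrt A > 0" using A2 by simp
  have "Sa \<le> Sb / sqrt A" using SaSb unfolding sqA by simp
  hence SbA: "Sb \<ge> sqrt A * Sa" using sqApos by (simp add: le_divide_eq mult.commute)
  have epsle: "\<epsilon> \<le> Sa"
    unfolding \<epsilon>_def epsC_def Sa_def h_def
  proof (rule cSUP_least)
    show "{0<..<1::real} \<noteq> {}" by simp
    fix W :: real assume W: "W \<in> {0<..<1}"
    show "W * exp (-\<beta>) powr EC (jW EC Eb W) \<le> (\<Sum>j. sqrt (\<omega> j) * exp (- \<beta> * EC j / 2))"
      by (rule markov_bound[OF beta_pos EC_nonneg EC_mono EC_inf ZC_fin \<omega>_nonneg \<omega>_sum energy Eb_ge]) (use W in auto)
  qed
  have epspos: "\<epsilon> > 0"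
  proof -
    have bd: "bdd_above ((\<lambda>W. W * exp (-\<beta>) powr EC (jW EC Eb W)) ` {0<..<1})"
    proof (rule bdd_aboveI2)
      fix W :: real assume "W \<in> {0<..<1}"
      moreover have "exp (-\<beta>) powr EC (jW EC Eb W) \<le> 1"
        using beta_pos EC_nonneg[of "jW EC Eb W"] by (simp add: powr_def)
      ultimately show "W * exp (-\<beta>) powr EC (jW EC Eb W) \<le> 1"
        by (intro mult_le_one) auto
    qed
    have "(1/2::real) * exp (-\<beta>) powr EC (jW EC Eb (1/2)) \<le> \<epsilon>"
      unfolding \<epsilon>_def epsC_def by (rule cSUP_upper[OF _ bd]) simp
    moreover have "(1/2::real) * exp (-\<beta>) powr EC (jW EC Eb (1/2)) > 0" by simp
    ultimately show ?thesis by linarith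
  qed
  have fpos: "fA A > 0"
  proof -
    have a: "A^2 > 0" using A2 by simp
    hence b: "A^2 + 1 > 0" by linarith
    show ?thesis unfolding fA_def by (intro mult_pos_pos divide_pos_pos) (use a b in auto)
  qed
  have fle: "fA A \<le> sqrt A - 1" by (rule fA_le[OF A2])
  define d where "d j = sqrt (\<omega>' j) - sqrt (\<omega> j)" for j
  have Xeq: "Sb - Sa = (\<Sum>j. d j * h j)"
    unfolding Sa_def Sb_def d_def using suminf_diff[OF sb sa] by (simp add: algebra_simps)
  have Xge: "Sb - Sa \<ge> fA A * \<epsilon>"
  proof -
    have "fA A * \<epsilon> \<le> (sqrt A - 1) * \<epsilon>" using fle epspos by (intro mult_right_mono) auto
    also have "\<dots> \<le> (sqrt A - 1) * Sa" using epsle fle fpos A2 by (intro mult_left_mono) auto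
    also have "\<dots> = sqrt A * Sa - Sa" by (simp add: algebra_simps)
    finally show ?thesis using SbA by linarith
  qed
  have dsq: "(d j)^2 \<le> \<bar>\<omega> j - \<omega>' j\<bar>" for j
  proof -
    have a: "sqrt (\<omega> j) \<ge> 0" "sqrt (\<omega>' j) \<ge> 0" using \<omega>_nonneg[of j] \<omega>'_nonneg[of j] by auto
    have "(d j)^2 = \<bar>d j\<bar> * \<bar>d j\<bar>" by (simp add: power2_eq_square)
    also have "\<dots> \<le> \<bar>d j\<bar> * (sqrt (\<omega>' j) + sqrt (\<omega> j))"
    proof -
      have c: "\<bar>d j\<bar> \<le> sqrt (\<omega>' j) + sqrt (\<omega> j)" unfolding d_def using a by (smt (verit))
      show ?thesis by (rule mult_left_mono[OF c]) simp
    qed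
    also have "\<dots> = \<bar>d j * (sqrt (\<omega>' j) + sqrt (\<omega> j))\<bar>" using a by (simp add: abs_mult)
    also have "d j * (sqrt (\<omega>' j) + sqrt (\<omega> j)) = \<omega>' j - \<omega> j"
      unfolding d_def using \<omega>_nonneg[of j] \<omega>'_nonneg[of j] by (simp add: algebra_simps)
    finally show ?thesis by (simp add: abs_minus_commute)
  qed
  have sabs: "summable (\<lambda>j. \<bar>\<omega> j - \<omega>' j\<bar>)"
  proof (rule summable_comparison_test')
    show "summable (\<lambda>j. \<omega> j + \<omega>' j)" using ws ws' by (rule summable_add)
    fix j show "norm \<bar>\<omega> j - \<omega>' j\<bar> \<le> \<omega> j + \<omega>' j" using \<omega>_nonneg[of j] \<omega>'_nonneg[of j] by simp
  qed
  have sd2: "summable (\<lambda>j. (d j)^2)"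
    by (rule summable_comparison_test'[OF sabs]) (use dsq in simp)
  have sdh: "summable (\<lambda>j. d j * h j)"
    unfolding d_def using summable_diff[OF sb sa] by (simp add: algebra_simps)
  have sh2: "summable (\<lambda>j. (h j)^2)" unfolding h2 by (rule ZC_fin)
  have H: "(\<Sum>j. (h j)^2) = ZC" unfolding h2 ZC_def ..
  have "fA A * \<epsilon> > 0" by (rule mult_pos_pos[OF fpos epspos])
  hence Xpos: "(\<Sum>j. d j * h j) > 0" using Xge Xeq by linarith
  have X2: "(\<Sum>j. d j * h j)^2 \<le> ZC * (\<Sum>j. (d j)^2)"
    using amgm_series[OF sdh sd2 sh2 Xpos] H ZCpos by simp
  have Dle: "(\<Sum>j. (d j)^2) \<le> (\<Sum>j. \<bar>\<omega> j - \<omega>' j\<bar>)"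
    by (rule suminf_le[OF dsq sd2 sabs])
  have p1: "(fA A * \<epsilon>)^2 \<le> (\<Sum>j. d j * h j)^2"
    using Xge Xeq fpos epspos by (intro power_mono) auto
  have p2: "ZC * (\<Sum>j. (d j)^2) \<le> ZC * (\<Sum>j. \<bar>\<omega> j - \<omega>' j\<bar>)"
    using Dle ZCpos by (intro mult_left_mono) auto
  have "(fA A * \<epsilon>)^2 \<le> ZC * (\<Sum>j. \<bar>\<omega> j - \<omega>' j\<bar>)" using p1 p2 X2 by linarith
  hence main: "(fA A * \<epsilon>)^2 / ZC \<le> (\<Sum>j. \<bar>\<omega> j - \<omega>' j\<bar>)"
    using ZCpos by (simp add: divide_le_eq mult.commute)
  have fin: "1/2 * (\<Sum>j. \<bar>\<omega> j - \<omega>' j\<bar>) \<ge> 1/2 * (fA A)^2 * \<epsilon>^2 / ZC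
      \<and> 1/2 * (fA A)^2 * \<epsilon>^2 / ZC > 0"
    using main fpos epspos ZCpos by (simp add: power_mult_distrib)
  show ?thesis using fin unfolding A_def ZS_def ek_def \<epsilon>_def ZC_def .
qed

end
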